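(* Let $X_0$ be a Polish space, $\mathcal{I}$ a $\sigma$-ideal with Borel base on $X_0$, and $X\subseteq X_0$ a Polish subspace. Let $\mathcal{F}$ be a family of functions $X\to X_0$ and $\mathfrak{I}=\{\mathcal{I}_f: f\in\mathcal{F}\}$ such that the pair $(\mathcal{F},\mathfrak{I})$ is fine in $X\subseteq X_0$, and assume (1) $|\mathcal{F}|\le \sup\{\mathrm{Cof}(\mathcal{I}_f): f\in\mathcal{F}\}$; (2) $\sup\{\mathrm{Cof}(\mathcal{I}_f): f\in\mathcal{F}\}\le \mathrm{Cov}(\mathcal{F},\mathfrak{I})$. Then there exists $A\subseteq X$ such that for every $f\in\mathcal{F}$ the image $f[A]$ is completely $\mathcal{I}_f$-nonmeasurable in $f[X]$.
   Context: A $\sigma$-ideal on a set $Y$ is a family of subsets closed under subsets and countable unions and containing all singletons; it has Borel base if every member is contained in a Borel member. For a Polish space $Y$ and a $\sigma$-ideal $\mathcal{J}$ with Borel base on $Y$, $\mathrm{Cof}(\mathcal{J})=\min\{|\mathcal{B}|:\mathcal{B}\subseteq \mathrm{Bor}(Y)\setminus\mathcal{J},\ \forall A\in \mathrm{Bor}(Y)\setminus\mathcal{J}\ \exists B\in\mathcal{B}\ B\subseteq A\}$. A set $S\subseteq Y$ is completely $\mathcal{J}$-nonmeasurable in $Y$ if for every Borel $B\subseteq Y$ with $B\notin\mathcal{J}$ we have $S\cap B\neq\emptyset$ and $B\setminus S\neq\emptyset$. The pair $(\mathcal{F},\mathfrak{I})$, where $\mathcal{F}$ is a family of functions from $X$ to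 $X_0$ and $\mathfrak{I}=\{\mathcal{I}_f:f\in\mathcal{F}\}$, is fine in $X\subseteq X_0$ if for every $f\in\mathcal{F}$, $f[X]$ is a Polish subspace of $X_0$ and $\mathcal{I}_f$ is a $\sigma$-ideal with Borel base on $f[X]$ containing all singletons of $f[X]$. Define $\mathrm{Cov}(\mathcal{F},\mathfrak{I})$ as the minimum of $|Z|$ over all $Z\subseteq X_0$ for which there exist $f\in\mathcal{F}$, a Borel set $B\subseteq f[X]$ with $B\notin\mathcal{I}_f$, and $\mathcal{F}_0\subseteq\mathcal{F}$ with $|\mathcal{F}_0|\le|Z|$ such that $f^{-1}[B]\subseteq\bigcup\{h^{-1}[Z]: h\in\mathcal{F}_0\}$. *)

theory Defs
  imports "HOL-Analysis.Analysis" "HOL-Library.FuncSet"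
begin

definition Polish_space :: "'a topology \<Rightarrow> bool" where
  "Polish_space T \<longleftrightarrow> completely_metrizable_space T \<and> separable_space T"

definition Borel_sets :: "'a topology \<Rightarrow> 'a set set" where
  "Borel_sets T = sigma_sets (topspace T) {U. openin T U}"

definition sigma_ideal :: "'a set \<Rightarrow> 'a set set \<Rightarrow> bool" where
  "sigma_ideal Y J \<longleftrightarrow>
     (\<forall>A\<in>J. A \<subseteq> Y) \<and>
     (\<forall>A\<in>J. \<forall>B. B \<subseteq> A \<longrightarrow> B \<in> J) \<and>
     (\<forall>A :: nat \<Rightarrow> 'a set. range A \<subseteq> J \<longrightarrow> (\<Union>n. A n) \<in> J) \<and>
     (\<forall>y\<in>Y. {y} \<in> J)"

definition sigma_ideal_Borel_base :: "'a topology \<Rightarrow> 'a set set \<Rightarrow> bool" where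
  "sigma_ideal_Borel_base T J \<longleftrightarrow>
     sigma_ideal (topspace T) J \<and> (\<forall>A\<in>J. \<exists>B\<in>Borel_sets T. A \<subseteq> B \<and> B \<in> J)"

definition Cof_family :: "'a topology \<Rightarrow> 'a set set \<Rightarrow> 'a set set \<Rightarrow> bool" where
  "Cof_family T J \<B> \<longleftrightarrow> \<B> \<subseteq> Borel_sets T - J \<and>
     (\<forall>A \<in> Borel_sets T - J. \<exists>B\<in>\<B>. B \<subseteq> A)"

text \<open>Cof(J): the least cardinality of such a family (as a cardinal, i.e. a
  well-order of a family of minimal size).\<close>
definition Cof :: "'a topology \<Rightarrow> 'a set set \<Rightarrow> 'a set rel" where
  "Cof T J = card_of (SOME \<B>. Cof_family T J \<B> \<and> (\<forall>\<B>'. Cof_family T J \<B>' \<longrightarrow> (card_of \<B>, card_of \<B>') \<in> ordLeq))"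

definition completely_nonmeasurable :: "'a topology \<Rightarrow> 'a set set \<Rightarrow> 'a set \<Rightarrow> bool" where
  "completely_nonmeasurable T J S \<longleftrightarrow>
     (\<forall>B\<in>Borel_sets T. B \<notin> J \<longrightarrow> S \<inter> B \<noteq> {} \<and> B - S \<noteq> {})"

text \<open>Fine pairs. Functions X -> X0 are represented extensionally (undefined outside X).\<close>
definition fine_pair :: "'a topology \<Rightarrow> 'a set \<Rightarrow> ('a \<Rightarrow> 'a) set \<Rightarrow> (('a \<Rightarrow> 'a) \<Rightarrow> 'a set set) \<Rightarrow> bool" where
  "fine_pair X0 X F I \<longleftrightarrow> X \<subseteq> topspace X0 \<and>
     (\<forall>f\<in>F. f \<in> X \<rightarrow>\<^sub>E topspace X0 \<and>
        Polish_space (subtopology X0 (f ` X)) \<and>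
        sigma_ideal_Borel_base (subtopology X0 (f ` X)) (I f))"

text \<open>Z is a witness set in the definition of Cov(F, I); Cov(F, I) is the least
  cardinality of such Z (infinite/undefined if there is none).\<close>
definition Cov_witness :: "'a topology \<Rightarrow> 'a set \<Rightarrow> ('a \<Rightarrow> 'a) set \<Rightarrow> (('a \<Rightarrow> 'a) \<Rightarrow> 'a set set) \<Rightarrow> 'a set \<Rightarrow> bool" where
  "Cov_witness X0 X F I Z \<longleftrightarrow> Z \<subseteq> topspace X0 \<and>
     (\<exists>f\<in>F. \<exists>B\<in>Borel_sets (subtopology X0 (f ` X)). B \<notin> I f \<and>
        (\<exists>F0 \<subseteq> F. (card_of F0, card_of Z) \<in> ordLeq \<and> {x\<in>X. f x \<in> B} \<subseteq> (\<Union>h\<in>F0. {x\<in>X. h x \<in> Z})))"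

text \<open>"r \<le> sup K" for a family K of cardinals, all represented on sets of type 'a set
  (every cardinal bounded by |UNIV :: 'a set set| is the cardinality of such a set).\<close>
definition card_le_Sup :: "'b rel \<Rightarrow> 'a set rel set \<Rightarrow> bool" where
  "card_le_Sup r K \<longleftrightarrow> (\<forall>S :: 'a set set. (\<forall>k\<in>K. (k, card_of S) \<in> ordLeq) \<longrightarrow> (r, card_of S) \<in> ordLeq)"

end

theory Submission
  imports Defs
begin

lemma cof_some:
  "Cof_family T J (SOME \<B>. Cof_family T J \<B> \<and> (\<forall>\<B>'. Cof_family T J \<B>' \<longrightarrow> (card_of \<B>, card_of \<B>') \<in> ordLeq)) \<and>
   (\<forall>\<B>'. Cof_family T J \<B>' \<longrightarrow> (card_of (SOME \<B>. Cof_family T J \<B> \<and> (\<forall>\<B>'. Cof_family T J \<B>' \<longrightarrow> (card_of \<B>, card_of \<B>') \<in> ordLeq)), card_of \<B>') \<in> ordLeq)"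
  (is "?P (SOME \<B>. ?P \<B>)")
proof -
  define R where "R = card_of ` {\<B>. Cof_family T J \<B>}"
  have "Cof_family T J (Borel_sets T - J)" unfolding Cof_family_def by blast
  then have "R \<noteq> {}" unfolding R_def by blast
  moreover have "\<forall>r\<in>R. Well_order r" unfolding R_def using card_of_Well_order by blast
  ultimately obtain r where r: "r \<in> R" "\<forall>r'\<in>R. (r, r') \<in> ordLeq"
    using exists_minim_Well_order[of R] by blast
  then obtain \<B> where B: "r = card_of \<B>" "Cof_family T J \<B>" unfolding R_def by blast
  have "?P \<B>"
  proof (intro conjI allI impI)
    show "Cof_family T J \<B>" by (rule B(2))
    fix \<B>' assume "Cof_family T J \<B>'"
    then have "card_of \<B>' \<in> R" unfolding R_def by blast
    then show "(card_of \<B>, card_of \<B>') \<in> ordLeq" using r(2) B(1) by blast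
  qed
  then show ?thesis by (rule someI)
qed

lemma borel_sa: "sigma_algebra (topspace T) (Borel_sets T)"
  unfolding Borel_sets_def by (rule sigma_algebra_sigma_sets) (auto dest: openin_subset)

lemma borel_sub: "B \<in> Borel_sets T \<Longrightarrow> B \<subseteq> topspace T"
  unfolding Borel_sets_def by (rule sigma_sets_into_sp) (auto dest: openin_subset)

lemma ideal_Un: "sigma_ideal Y J \<Longrightarrow> A \<in> J \<Longrightarrow> B \<in> J \<Longrightarrow> A \<union> B \<in> J"
proof -
  assume s: "sigma_ideal Y J" and a: "A \<in> J" "B \<in> J"
  define C where "C = (\<lambda>n::nat. if n = 0 then A else B)"
  have "range C \<subseteq> J" using a by (auto simp: C_def)
  then have "(\<Union>n. C n) \<in> J" using s unfolding sigma_ideal_def by blast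
  moreover have "(\<Union>n. C n) = A \<union> B" unfolding C_def
    by (auto split: if_splits)
  ultimately show ?thesis by simp
qed

lemma cof_infinite:
  assumes "sigma_ideal_Borel_base T J" "Polish_space T" "Cof_family T J \<B>" "\<B> \<noteq> {}"
    "\<forall>D\<in>\<B>. D \<noteq> {}"
  shows "infinite \<B>"
proof
  assume fin: "finite \<B>"
  obtain m where m: "m \<in> \<B>" "\<forall>b\<in>\<B>. b \<subseteq> m \<longrightarrow> m = b"
    using finite_has_minimal[OF fin assms(4)] by blast
  have t1: "t1_space T" using assms(2) unfolding Polish_space_def
    using Hausdorff_imp_t1_space completely_metrizable_imp_metrizable_space metrizable_imp_Hausdorff_space by blast
  have mB: "m \<in> Borel_sets T" "m \<notin> J" using m assms(3) unfolding Cof_family_def by auto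
  obtain y where y: "y \<in> m" using m assms(5) by blast
  have yT: "y \<in> topspace T" using borel_sub mB y by blast
  have "closedin T {y}" using t1 yT by (simp add: t1_space_closedin_singleton)
  then have "openin T (topspace T - {y})" by (simp add: closedin_def)
  then have "topspace T - {y} \<in> Borel_sets T" unfolding Borel_sets_def by blast
  then have "m \<inter> (topspace T - {y}) \<in> Borel_sets T"
  proof -
    interpret sigma_algebra "topspace T" "Borel_sets T" by (rule borel_sa)
    show ?thesis using mB(1) \<open>topspace T - {y} \<in> Borel_sets T\<close> by blast
  qed
  moreover have "m \<inter> (topspace T - {y}) = m - {y}" using borel_sub[OF mB(1)] by blast
  ultimately have mB2: "m - {y} \<in> Borel_sets T" by simp
  have sy: "{y} \<in> J" using assms(1) yT unfolding sigma_ideal_Borel_base_def sigma_ideal_def by blast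
  have "m - {y} \<notin> J"
  proof
    assume "m - {y} \<in> J"
    then have "(m - {y}) \<union> {y} \<in> J" using ideal_Un sy assms(1) unfolding sigma_ideal_Borel_base_def by blast
    then show False using mB y by (simp add: insert_absorb)
  qed
  then obtain b where "b \<in> \<B>" "b \<subseteq> m - {y}" using assms(3) mB2 unfolding Cof_family_def by blast
  then show False using m y by blast
qed


theorem mainTheorem2:
  fixes X0 :: "'a topology" and X :: "'a set" and I0 :: "'a set set"
    and F :: "('a \<Rightarrow> 'a) set" and I :: "('a \<Rightarrow> 'a) \<Rightarrow> 'a set set"
  assumes "Polish_space X0"
    and "sigma_ideal_Borel_base X0 I0"
    and "X \<subseteq> topspace X0" and "Polish_space (subtopology X0 X)"
    and "fine_pair X0 X F I"
    and "card_le_Sup (card_of F) ((\<lambda>f. Cof (subtopology X0 (f ` X)) (I f)) ` F)"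
    and "\<forall>Z. Cov_witness X0 X F I Z \<longrightarrow>
           (\<forall>f\<in>F. (Cof (subtopology X0 (f ` X)) (I f), card_of Z) \<in> ordLeq)"
  shows "\<exists>A \<subseteq> X. \<forall>f\<in>F. completely_nonmeasurable (subtopology X0 (f ` X)) (I f) (f ` A)"
proof -
  note fp = assms(5)[unfolded fine_pair_def]
  define T where "T = (\<lambda>f. subtopology X0 (f ` X))"
  have a6: "card_le_Sup (card_of F) ((\<lambda>f. Cof (T f) (I f)) ` F)" using assms(6) by (simp add: T_def)
  have a7: "\<And>Z. Cov_witness X0 X F I Z \<Longrightarrow> \<forall>f\<in>F. (Cof (T f) (I f), card_of Z) \<in> ordLeq"
    using assms(7) by (simp add: T_def)
  define D where "D = (\<lambda>f. SOME \<B>. Cof_family (T f) (I f) \<B> \<and> (\<forall>\<B>'. Cof_family (T f) (I f) \<B>' \<longrightarrow> (card_of \<B>, card_of \<B>') \<in> ordLeq))"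
  have Dcof: "\<And>f. Cof_family (T f) (I f) (D f)" unfolding D_def by (rule conjunct1[OF cof_some])
  have CofD: "\<And>f. Cof (T f) (I f) = card_of (D f)" unfolding Cof_def D_def by (rule refl)
  have fT: "\<And>f x. f \<in> F \<Longrightarrow> x \<in> X \<Longrightarrow> f x \<in> topspace X0" using fp by (auto simp: PiE_def Pi_def)
  have topT: "\<And>f. topspace (T f) \<subseteq> topspace X0" unfolding T_def by simp
  have DB: "\<And>f B. B \<in> D f \<Longrightarrow> B \<in> Borel_sets (T f) \<and> B \<notin> I f \<and> B \<subseteq> topspace X0"
  proof -
    fix f B assume B: "B \<in> D f"
    then have "B \<in> Borel_sets (T f) \<and> B \<notin> I f" using Dcof[of f] unfolding Cof_family_def by blast
    moreover then have "B \<subseteq> topspace X0" using borel_sub[of B "T f"] topT[of f] by blast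
    ultimately show "B \<in> Borel_sets (T f) \<and> B \<notin> I f \<and> B \<subseteq> topspace X0" by blast
  qed
  have wit: "\<And>Z. Cov_witness X0 X F I Z \<Longrightarrow> (\<forall>f\<in>F. (card_of (D f), card_of Z) \<in> ordLeq) \<and> (card_of F, card_of Z) \<in> ordLeq"
  proof -
    fix Z assume "Cov_witness X0 X F I Z"
    with a7 have 1: "\<forall>f\<in>F. (card_of (D f), card_of Z) \<in> ordLeq" by (simp add: CofD)
    let ?S = "(\<lambda>z. {z}) ` Z"
    have "bij_betw (\<lambda>z. {z}) Z ?S" unfolding bij_betw_def inj_on_def by auto
    then have iso: "(card_of Z, card_of ?S) \<in> ordIso" using card_of_ordIso by blast
    have "\<forall>k\<in>(\<lambda>f. Cof (T f) (I f)) ` F. (k, card_of ?S) \<in> ordLeq"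
      using 1 ordLeq_ordIso_trans[OF _ iso] by (auto simp: CofD)
    then have "(card_of F, card_of ?S) \<in> ordLeq" using a6 unfolding card_le_Sup_def by blast
    then have "(card_of F, card_of Z) \<in> ordLeq" by (rule ordLeq_ordIso_trans[OF _ ordIso_symmetric[OF iso]])
    with 1 show "(\<forall>f\<in>F. (card_of (D f), card_of Z) \<in> ordLeq) \<and> (card_of F, card_of Z) \<in> ordLeq" by blast
  qed
  have hne: "\<And>f B. f \<in> F \<Longrightarrow> B \<in> D f \<Longrightarrow> B \<noteq> {}"
  proof
    fix f B assume f: "f \<in> F" and B: "B \<in> D f" and e: "B = {}"
    have c: "\<exists>F0\<subseteq>F. (card_of F0, card_of ({}::'a set)) \<in> ordLeq \<and> {x \<in> X. f x \<in> B} \<subseteq> (\<Union>h\<in>F0. {x \<in> X. h x \<in> {}})"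
      using e card_of_empty by (intro exI[of _ "{}"]) auto
    have "Cov_witness X0 X F I {}"
      unfolding Cov_witness_def using f DB[OF B] c unfolding T_def by blast
    then have "(card_of (D f), card_of ({}::'a set)) \<in> ordLeq" using wit f by blast
    then have "D f = {}" by (rule card_of_empty3)
    with B show False by simp
  qed
  define P where "P = Sigma F D"
  show ?thesis
  proof (cases "P = {}")
    case True
    show ?thesis
    proof (intro exI[of _ "{}"] conjI ballI)
      fix f assume f: "f \<in> F"
      show "completely_nonmeasurable (subtopology X0 (f ` X)) (I f) (f ` {})"
        unfolding completely_nonmeasurable_def
      proof (intro ballI impI)
        fix B assume "B \<in> Borel_sets (subtopology X0 (f ` X))" "B \<notin> I f"
        then obtain b where "b \<in> D f" using Dcof[of f] unfolding Cof_family_def T_def by blast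
        with f True show "f ` {} \<inter> B \<noteq> {} \<and> B - f ` {} \<noteq> {}" unfolding P_def by blast
      qed
    qed simp
  next
    case False
    then obtain g D0 where g: "g \<in> F" "D0 \<in> D g" unfolding P_def by blast
    have infDg: "infinite (D g)"
    proof (rule cof_infinite)
      show "sigma_ideal_Borel_base (T g) (I g)" "Polish_space (T g)" using fp g unfolding T_def by auto
      show "Cof_family (T g) (I g) (D g)" by (rule Dcof)
      show "D g \<noteq> {}" using g by blast
      show "\<forall>D\<in>D g. D \<noteq> {}" using g hne by blast
    qed
    have "D g = snd ` ({g} \<times> D g)" by auto
    moreover have "{g} \<times> D g \<subseteq> P" using g unfolding P_def by auto
    ultimately have infP: "infinite P" using infDg by (metis finite_imageI finite_subset)
    have big: "\<And>Z. Cov_witness X0 X F I Z \<Longrightarrow> (card_of P, card_of Z) \<in> ordLeq"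
    proof -
      fix Z assume Z: "Cov_witness X0 X F I Z"
      note w = wit[OF Z]
      then have "infinite Z" using infDg g card_of_ordLeq_infinite[of "D g" Z] by blast
      then show "(card_of P, card_of Z) \<in> ordLeq" unfolding P_def
        using card_of_Sigma_ordLeq_infinite[of Z F D] w by blast
    qed
    have Dbig: "\<And>p. p \<in> P \<Longrightarrow> (card_of P, card_of (snd p)) \<in> ordLeq"
    proof -
      fix p assume p: "p \<in> P"
      then have f: "fst p \<in> F" and B: "snd p \<in> D (fst p)" unfolding P_def by auto
      have c: "\<exists>F0\<subseteq>F. (card_of F0, card_of (snd p)) \<in> ordLeq \<and> {x \<in> X. fst p x \<in> snd p} \<subseteq> (\<Union>h\<in>F0. {x \<in> X. h x \<in> snd p})"
        using f card_of_singl_ordLeq[OF hne[OF f B]] by (intro exI[of _ "{fst p}"]) auto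
      have "Cov_witness X0 X F I (snd p)"
        unfolding Cov_witness_def using f DB[OF B] c unfolding T_def by blast
      then show "(card_of P, card_of (snd p)) \<in> ordLeq" using big by blast
    qed
    define r where "r = card_of P"
    have Cr: "Card_order r" and Fr: "Field r = P" and Wr: "Well_order r"
      unfolding r_def by (rule card_of_Card_order, rule Field_card_of, rule card_of_Well_order)
    have wfr: "wf (r - Id)" using Wr unfolding well_order_on_def by blast
    have tot: "\<And>p q. p \<in> P \<Longrightarrow> q \<in> P \<Longrightarrow> p \<noteq> q \<Longrightarrow> (p, q) \<in> r \<or> (q, p) \<in> r"
      using Wr Fr unfolding well_order_on_def linear_order_on_def total_on_def by blast
    have small: "\<And>p. p \<in> P \<Longrightarrow> (card_of (underS r p), card_of P) \<in> ordLess"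
      using card_of_underS[OF Cr] Fr unfolding r_def by auto
    have USP: "\<And>p. underS r p \<subseteq> P" using Fr unfolding underS_def Field_def by blast
    have USr: "\<And>p q. q \<in> underS r p \<longleftrightarrow> (q, p) \<in> r - Id" unfolding underS_def by blast
    have fin_small: "\<And>(S::'a set). finite S \<Longrightarrow> (card_of S, card_of P) \<in> ordLess"
      using finite_ordLess_infinite[OF card_of_Well_order card_of_Well_order] infP by (simp add: Field_card_of)
    have exist_x: "\<And>p b. p \<in> P \<Longrightarrow> \<exists>x. x \<in> X \<and> fst p x \<in> snd p \<and> (\<forall>q\<in>underS r p. fst q x \<noteq> b q)"
    proof (rule ccontr)
      fix p b assume p: "p \<in> P" and nx: "\<nexists>x. x \<in> X \<and> fst p x \<in> snd p \<and> (\<forall>q\<in>underS r p. fst q x \<noteq> b q)"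
      then have f: "fst p \<in> F" and B: "snd p \<in> D (fst p)" unfolding P_def by auto
      let ?U = "underS r p"
      have "(card_of ?U, card_of (snd p)) \<in> ordLeq"
        using ordLess_imp_ordLeq[OF ordLess_ordLeq_trans[OF small[OF p] Dbig[OF p]]] .
      then obtain h where h: "inj_on h ?U" "h ` ?U \<subseteq> snd p" using card_of_ordLeq[of ?U "snd p"] by blast
      define E where "E = h ` ?U"
      define Z where "Z = (b ` ?U \<inter> topspace X0) \<union> E"
      have "bij_betw h ?U E" using h unfolding E_def bij_betw_def by blast
      then have UE: "(card_of ?U, card_of E) \<in> ordIso" using card_of_ordIso by blast
      have Ztop: "Z \<subseteq> topspace X0" using DB[OF B] h unfolding Z_def E_def by blast
      have c1: "(card_of (fst ` ?U), card_of Z) \<in> ordLeq"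
      proof -
        have "(card_of (fst ` ?U), card_of ?U) \<in> ordLeq" by (rule card_of_image)
        moreover have "(card_of E, card_of Z) \<in> ordLeq" unfolding Z_def by (rule card_of_mono1) blast
        ultimately show ?thesis using ordLeq_transitive[OF ordLeq_ordIso_trans[OF _ UE]] by blast
      qed
      have c2: "{x \<in> X. fst p x \<in> snd p} \<subseteq> (\<Union>h\<in>fst ` ?U. {x \<in> X. h x \<in> Z})"
      proof
        fix x assume x: "x \<in> {x \<in> X. fst p x \<in> snd p}"
        then obtain q where q: "q \<in> ?U" "fst q x = b q" using nx by blast
        have "q \<in> P" using q(1) USP[of p] by blast
        then have "fst q \<in> F" unfolding P_def by (cases q) auto
        then have "fst q x \<in> topspace X0" using fT x by blast
        then have "fst q x \<in> Z" using q unfolding Z_def by auto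
        then show "x \<in> (\<Union>h\<in>fst ` ?U. {x \<in> X. h x \<in> Z})" using x q by blast
      qed
      have F0F: "fst ` ?U \<subseteq> F" using USP[of p] unfolding P_def by force
      have "Cov_witness X0 X F I Z"
        unfolding Cov_witness_def using f DB[OF B] c1 c2 F0F Ztop unfolding T_def by blast
      then have 1: "(card_of P, card_of Z) \<in> ordLeq" using big by blast
      have "(card_of (b ` ?U \<inter> topspace X0), card_of P) \<in> ordLess"
      proof -
        have "(card_of (b ` ?U \<inter> topspace X0), card_of (b ` ?U)) \<in> ordLeq" by (rule card_of_mono1) blast
        then show ?thesis using ordLeq_ordLess_trans[OF ordLeq_transitive[OF _ card_of_image] small[OF p]] by blast
      qed
      moreover have "(card_of E, card_of P) \<in> ordLess"
        using ordIso_ordLess_trans[OF ordIso_symmetric[OF UE] small[OF p]] .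
      ultimately have "(card_of Z, card_of P) \<in> ordLess" unfolding Z_def
        using card_of_Un_ordLess_infinite[OF infP] by blast
      with 1 show False using not_ordLess_ordLeq by auto
    qed
    have exist_b: "\<And>p x0 y. p \<in> P \<Longrightarrow> \<exists>b. b \<in> snd p \<and> b \<noteq> fst p x0 \<and> (\<forall>q\<in>underS r p. fst p (y q) \<noteq> b)"
    proof (rule ccontr)
      fix p x0 y assume p: "p \<in> P" and nb: "\<nexists>b. b \<in> snd p \<and> b \<noteq> fst p x0 \<and> (\<forall>q\<in>underS r p. fst p (y q) \<noteq> b)"
      let ?U = "underS r p"
      have "snd p \<subseteq> {fst p x0} \<union> (\<lambda>q. fst p (y q)) ` ?U" using nb by blast
      then have 1: "(card_of (snd p), card_of ({fst p x0} \<union> (\<lambda>q. fst p (y q)) ` ?U)) \<in> ordLeq"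
        by (rule card_of_mono1)
      have "(card_of ((\<lambda>q. fst p (y q)) ` ?U), card_of P) \<in> ordLess"
        using ordLeq_ordLess_trans[OF card_of_image small[OF p]] .
      then have "(card_of ({fst p x0} \<union> (\<lambda>q. fst p (y q)) ` ?U), card_of P) \<in> ordLess"
        using card_of_Un_ordLess_infinite[OF infP fin_small[of "{fst p x0}"]] by blast
      then have "(card_of (snd p), card_of P) \<in> ordLess" using ordLeq_ordLess_trans[OF 1] by blast
      with Dbig[OF p] show False using not_ordLess_ordLeq by auto
    qed
    define G where "G = (\<lambda>(rec :: ('a \<Rightarrow> 'a) \<times> 'a set \<Rightarrow> 'a \<times> 'a) p.
       let x = (SOME x. x \<in> X \<and> fst p x \<in> snd p \<and> (\<forall>q\<in>underS r p. fst q x \<noteq> snd (rec q)))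
       in (x, SOME b. b \<in> snd p \<and> b \<noteq> fst p x \<and> (\<forall>q\<in>underS r p. fst p (fst (rec q)) \<noteq> b)))"
    define val where "val = wfrec (r - Id) G"
    have props: "\<And>p. p \<in> P \<Longrightarrow> fst (val p) \<in> X \<and> fst p (fst (val p)) \<in> snd p \<and>
        (\<forall>q\<in>underS r p. fst q (fst (val p)) \<noteq> snd (val q)) \<and>
        snd (val p) \<in> snd p \<and> snd (val p) \<noteq> fst p (fst (val p)) \<and>
        (\<forall>q\<in>underS r p. fst p (fst (val q)) \<noteq> snd (val p))"
    proof -
      fix p assume p: "p \<in> P"
      define c where "c = cut val (r - Id) p"
      have cq: "\<And>q. q \<in> underS r p \<Longrightarrow> c q = val q" unfolding c_def using USr by (simp add: cut_apply)
      have v: "val p = G c p" unfolding val_def c_def by (rule wfrec[OF wfr])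
      define x where "x = (SOME x. x \<in> X \<and> fst p x \<in> snd p \<and> (\<forall>q\<in>underS r p. fst q x \<noteq> snd (c q)))"
      define b where "b = (SOME b. b \<in> snd p \<and> b \<noteq> fst p x \<and> (\<forall>q\<in>underS r p. fst p (fst (c q)) \<noteq> b))"
      have vx: "val p = (x, b)" unfolding v G_def x_def b_def by (simp add: Let_def)
      have hx: "x \<in> X \<and> fst p x \<in> snd p \<and> (\<forall>q\<in>underS r p. fst q x \<noteq> snd (c q))"
        unfolding x_def by (rule someI_ex) (rule exist_x[OF p])
      have hb: "b \<in> snd p \<and> b \<noteq> fst p x \<and> (\<forall>q\<in>underS r p. fst p (fst (c q)) \<noteq> b)"
        unfolding b_def by (rule someI_ex) (rule exist_b[OF p])
      show "fst (val p) \<in> X \<and> fst p (fst (val p)) \<in> snd p \<and>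
        (\<forall>q\<in>underS r p. fst q (fst (val p)) \<noteq> snd (val q)) \<and>
        snd (val p) \<in> snd p \<and> snd (val p) \<noteq> fst p (fst (val p)) \<and>
        (\<forall>q\<in>underS r p. fst p (fst (val q)) \<noteq> snd (val p))"
        using hx hb cq vx by simp
    qed
    define A where "A = (\<lambda>p. fst (val p)) ` P"
    show ?thesis
    proof (intro exI[of _ A] conjI ballI)
      show "A \<subseteq> X" unfolding A_def using props by blast
      fix f assume f: "f \<in> F"
      show "completely_nonmeasurable (subtopology X0 (f ` X)) (I f) (f ` A)"
        unfolding completely_nonmeasurable_def
      proof (intro ballI impI conjI)
        fix B assume "B \<in> Borel_sets (subtopology X0 (f ` X))" "B \<notin> I f"
        then obtain Dd where Dd: "Dd \<in> D f" "Dd \<subseteq> B" using Dcof[of f] unfolding Cof_family_def T_def by blast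
        define p where "p = (f, Dd)"
        have p: "p \<in> P" unfolding p_def P_def using f Dd by auto
        note pp = props[OF p]
        have "f (fst (val p)) \<in> f ` A" unfolding A_def using p by blast
        moreover have "f (fst (val p)) \<in> B" using pp Dd unfolding p_def by auto
        ultimately show "f ` A \<inter> B \<noteq> {}" by blast
        have "snd (val p) \<notin> f ` A"
        proof
          assume "snd (val p) \<in> f ` A"
          then obtain q where q: "q \<in> P" "snd (val p) = f (fst (val q))" unfolding A_def by blast
          note qq = props[OF q(1)]
          consider "q = p" | "q \<in> underS r p" | "p \<in> underS r q"
            using tot[OF p q(1)] unfolding underS_def by blast
          then show False
          proof cases
            case 1 then show False using pp q unfolding p_def by auto
          next
            case 2 then show False using pp q unfolding p_def by auto
          next
            case 3 then show False using qq q unfolding p_def by auto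
          qed
        qed
        moreover have "snd (val p) \<in> B" using pp Dd unfolding p_def by auto
        ultimately show "B - f ` A \<noteq> {}" by blast
      qed
    qed
  qed
qed

end
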